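(* Let $g$ be a $1$-Lipschitz function on $\mathbb R$ supported on $[0,1]$, $N$ a positive integer, $L>0$, $\alpha\in(0,1]$ and $M>0$. For $\varepsilon=(\varepsilon_1,\ldots,\varepsilon_{2^N})\in\{-1,1\}^{2^N}$ define $G_\varepsilon(x)=L\sum_{k=0}^{2^N-1}\varepsilon_{k+1}\,g(2^Nx-k)$ for $x\in[0,1]$. If $L\le2^{-[(N-1)\alpha+1]}M$, then for every $\varepsilon\in\{-1,1\}^{2^N}$, $|G_\varepsilon(x)-G_\varepsilon(y)|\le M|x-y|^\alpha$ for all $x,y\in[0,1]$. *)

theory Defs
  imports Complex_Main
begin

text \<open>G_eps(x) = L * sum_{k=0}^{2^N-1} eps_{k+1} g(2^N x - k); the sign vector
  eps in {-1,1}^{2^N} is a function on indices 1..2^N.\<close>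
definition G_eps :: "real \<Rightarrow> nat \<Rightarrow> (real \<Rightarrow> real) \<Rightarrow> (nat \<Rightarrow> real) \<Rightarrow> real \<Rightarrow> real" where
  "G_eps L N g eps x = L * (\<Sum>k<2^N. eps (k+1) * g (2^N * x - real k))"

end

theory Submission
  imports Defs
begin

lemma g_zero_pts:
  fixes g :: "real \<Rightarrow> real"
  assumes lip: "\<forall>x y. \<bar>g x - g y\<bar> \<le> \<bar>x - y\<bar>"
    and supp: "\<forall>x. x \<notin> {0..1} \<longrightarrow> g x = 0"
  shows "g 0 = 0" "g 1 = 0"
proof -
  have "\<bar>g 0\<bar> \<le> e" if "e > 0" for e
    using lip[rule_format, of 0 "-e"] supp[rule_format, of "-e"] that by auto
  then show "g 0 = 0"
    by (metis abs_ge_zero abs_le_zero_iff dense not_le)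
  have "\<bar>g 1\<bar> \<le> e" if "e > 0" for e
    using lip[rule_format, of 1 "1+e"] supp[rule_format, of "1+e"] that by auto
  then show "g 1 = 0"
    by (metis abs_ge_zero abs_le_zero_iff dense not_le)
qed

lemma H_formula:
  fixes g :: "real \<Rightarrow> real" and eps :: "nat \<Rightarrow> real"
  assumes supp: "\<forall>x. x \<notin> {0..1} \<longrightarrow> g x = 0" and g1: "g 1 = 0"
  shows "(\<Sum>k<(n::nat). eps (k+1) * g (t - real k)) =
     (if 0 \<le> \<lfloor>t\<rfloor> \<and> \<lfloor>t\<rfloor> < int n then eps (nat \<lfloor>t\<rfloor> + 1) * g (t - of_int \<lfloor>t\<rfloor>) else 0)"
proof -
  have van: "g (t - real k) = 0" if "int k \<noteq> \<lfloor>t\<rfloor>" for k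
  proof (cases "t - real k \<in> {0..1}")
    case True
    then have "real k \<le> t" by auto
    then have "int k \<le> \<lfloor>t\<rfloor>" by (simp add: le_floor_iff)
    with that have "int k + 1 \<le> \<lfloor>t\<rfloor>" by simp
    then have "real k + 1 \<le> t" by (metis floor_le_iff le_floor_iff not_le of_int_1 of_int_add of_int_of_nat_eq)
    with True have "t - real k = 1" by auto
    then show ?thesis using g1 by simp
  next
    case False then show ?thesis using supp by auto
  qed
  show ?thesis
  proof (cases "0 \<le> \<lfloor>t\<rfloor> \<and> \<lfloor>t\<rfloor> < int n")
    case True
    define j where "j = nat \<lfloor>t\<rfloor>"
    have jt: "int j = \<lfloor>t\<rfloor>" using True j_def by simp
    have "int j < int n" using True jt by simp
    then have jn: "j \<in> {..<n}" by simp
    have "(\<Sum>k<n. eps (k+1) * g (t - real k)) = (\<Sum>k\<in>{j}. eps (k+1) * g (t - real k))"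
      by (rule sum.mono_neutral_cong_right) (use van jt jn in auto)
    then have "(\<Sum>k<n. eps (k+1) * g (t - real k)) = eps (j+1) * g (t - real j)" by simp
    moreover have "real j = of_int \<lfloor>t\<rfloor>" using jt by (metis of_int_of_nat_eq)
    ultimately show ?thesis using True j_def by simp
  next
    case False
    have "(\<Sum>k<n. eps (k+1) * g (t - real k)) = 0"
    proof (rule sum.neutral, intro ballI)
      fix k assume "k \<in> {..<n}"
      then have kn: "k < n" by simp
      have "int k \<noteq> \<lfloor>t\<rfloor>"
      proof
        assume "int k = \<lfloor>t\<rfloor>"
        with False kn show False by (metis of_nat_0_le_iff of_nat_less_iff)
      qed
      then show "eps (k+1) * g (t - real k) = 0" using van by simp
    qed
    then show ?thesis unfolding if_not_P[OF False] .
  qed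
qed

lemma H_bounds:
  fixes g :: "real \<Rightarrow> real" and eps :: "nat \<Rightarrow> real"
  assumes lip: "\<forall>x y. \<bar>g x - g y\<bar> \<le> \<bar>x - y\<bar>"
    and supp: "\<forall>x. x \<notin> {0..1} \<longrightarrow> g x = 0"
    and eps: "\<forall>i\<in>{1..n}. eps i \<in> {-1, 1::real}"
  defines "H \<equiv> \<lambda>t. (\<Sum>k<(n::nat). eps (k+1) * g (t - real k))"
  shows "\<bar>H t\<bar> \<le> t - of_int \<lfloor>t\<rfloor>" "\<bar>H t\<bar> \<le> of_int \<lfloor>t\<rfloor> + 1 - t"
    "\<lfloor>s\<rfloor> = \<lfloor>t\<rfloor> \<Longrightarrow> \<bar>H s - H t\<bar> \<le> \<bar>s - t\<bar>"
proof -
  note g01 = g_zero_pts[OF lip supp]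
  have Hf: "H u = (if 0 \<le> \<lfloor>u\<rfloor> \<and> \<lfloor>u\<rfloor> < int n then eps (nat \<lfloor>u\<rfloor> + 1) * g (u - of_int \<lfloor>u\<rfloor>) else 0)" for u
    unfolding H_def by (rule H_formula[OF supp g01(2)])
  have ea: "\<bar>eps (nat \<lfloor>u\<rfloor> + 1)\<bar> = 1" if "0 \<le> \<lfloor>u\<rfloor> \<and> \<lfloor>u\<rfloor> < int n" for u
  proof -
    have "int (nat \<lfloor>u\<rfloor>) < int n" using that by simp
    then have "nat \<lfloor>u\<rfloor> < n" by (simp only: of_nat_less_iff)
    then have "nat \<lfloor>u\<rfloor> + 1 \<in> {1..n}" by auto
    then have "eps (nat \<lfloor>u\<rfloor> + 1) \<in> {-1, 1}" using eps by blast
    then show ?thesis by auto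
  qed
  have ga: "\<bar>g v\<bar> \<le> v" "\<bar>g v\<bar> \<le> 1 - v" if "0 \<le> v" "v \<le> 1" for v
    using that lip[rule_format, of v 0] lip[rule_format, of v 1] g01 supp[rule_format, of v] by auto
  have fl: "0 \<le> u - of_int \<lfloor>u\<rfloor>" "u - of_int \<lfloor>u\<rfloor> \<le> 1" for u :: real
    by (simp_all add: floor_le_iff) linarith
  show "\<bar>H t\<bar> \<le> t - of_int \<lfloor>t\<rfloor>"
    using Hf[of t] ea[of t] ga(1)[of "t - of_int \<lfloor>t\<rfloor>"] fl[of t] by (auto simp: abs_mult)
  show "\<bar>H t\<bar> \<le> of_int \<lfloor>t\<rfloor> + 1 - t"
    using Hf[of t] ea[of t] ga(2)[of "t - of_int \<lfloor>t\<rfloor>"] fl[of t] by (auto simp: abs_mult)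
  assume st: "\<lfloor>s\<rfloor> = \<lfloor>t\<rfloor>"
  show "\<bar>H s - H t\<bar> \<le> \<bar>s - t\<bar>"
  proof (cases "0 \<le> \<lfloor>t\<rfloor> \<and> \<lfloor>t\<rfloor> < int n")
    case True
    have "H s - H t = eps (nat \<lfloor>t\<rfloor> + 1) * (g (s - of_int \<lfloor>t\<rfloor>) - g (t - of_int \<lfloor>t\<rfloor>))"
      using Hf[of s] Hf[of t] st True by (simp add: algebra_simps)
    then have "\<bar>H s - H t\<bar> = \<bar>g (s - of_int \<lfloor>t\<rfloor>) - g (t - of_int \<lfloor>t\<rfloor>)\<bar>"
      using ea[OF True] by (simp add: abs_mult)
    also have "\<dots> \<le> \<bar>s - t\<bar>" using lip by (metis diff_diff_eq2 diff_add_cancel add_diff_cancel_right' abs_minus_commute)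
    finally show ?thesis .
  next
    case False
    then show ?thesis using Hf[of s, unfolded st, unfolded if_not_P[OF False]]
      Hf[of t, unfolded if_not_P[OF False]] by simp
  qed
qed

lemma H_lip:
  fixes H :: "real \<Rightarrow> real"
  assumes b1: "\<And>t. \<bar>H t\<bar> \<le> t - of_int \<lfloor>t\<rfloor>"
    and b2: "\<And>t. \<bar>H t\<bar> \<le> of_int \<lfloor>t\<rfloor> + 1 - t"
    and b3: "\<And>s t. \<lfloor>s\<rfloor> = \<lfloor>t\<rfloor> \<Longrightarrow> \<bar>H s - H t\<bar> \<le> \<bar>s - t\<bar>"
  shows "\<bar>H s - H t\<bar> \<le> \<bar>s - t\<bar>"
proof -
  have *: "\<bar>H s - H t\<bar> \<le> \<bar>s - t\<bar>" if "s \<le> t" for s t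
  proof (cases "\<lfloor>s\<rfloor> = \<lfloor>t\<rfloor>")
    case True then show ?thesis using b3 by blast
  next
    case False
    with that have "\<lfloor>s\<rfloor> < \<lfloor>t\<rfloor>" by (meson floor_mono order_le_neq_trans)
    then have "of_int \<lfloor>s\<rfloor> + 1 \<le> (of_int \<lfloor>t\<rfloor> :: real)" by (metis of_int_1 of_int_add of_int_le_iff zless_imp_add1_zle)
    then show ?thesis using b1[of t] b2[of s] that by linarith
  qed
  show ?thesis using *[of s t] *[of t s] by (cases "s \<le> t") (auto simp: abs_minus_commute)
qed

lemma final_arith:
  fixes N :: nat and L \<alpha> M d D :: real
  assumes \<alpha>: "0 < \<alpha>" "\<alpha> \<le> 1" and M: "M > 0" and L: "L > 0"
    and Lbound: "L \<le> 2 powr (- ((real N - 1) * \<alpha> + 1)) * M"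
    and d: "0 < d"
    and D1: "D \<le> L * (2^N * d)" and D2: "D \<le> L"
  shows "D \<le> M * d powr \<alpha>"
proof -
  define u where "u = log 2 d"
  have du: "d = 2 powr u" using d unfolding u_def by simp
  have dpa: "d powr \<alpha> = 2 powr (\<alpha> * u)" using du by (simp add: powr_powr mult.commute)
  have pN: "(2::real)^N = 2 powr real N" by (simp add: powr_realpow)
  show ?thesis
  proof (cases "2^N * d \<le> (1::real)")
    case True
    then have "2 powr (real N + u) \<le> 2 powr 0" using pN du by (simp add: powr_add)
    then have uN: "real N + u \<le> 0" using powr_le_cancel_iff[of 2 "real N + u" 0] by simp
    have "(1 - \<alpha>) * (real N + u - 1) \<le> 0" using \<alpha> uN by (intro mult_nonneg_nonpos) auto
    then have ex: "- ((real N - 1) * \<alpha> + 1) + real N + u \<le> \<alpha> * u" by (simp add: algebra_simps)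
    have "D \<le> L * (2^N * d)" by fact
    also have "\<dots> \<le> 2 powr (- ((real N - 1) * \<alpha> + 1)) * M * (2^N * d)"
      using Lbound d by (intro mult_right_mono) auto
    also have "\<dots> = M * 2 powr (- ((real N - 1) * \<alpha> + 1) + real N + u)"
      using pN du by (simp add: powr_add)
    also have "\<dots> \<le> M * 2 powr (\<alpha> * u)" using M ex by (intro mult_left_mono) auto
    finally show ?thesis using dpa by simp
  next
    case False
    then have "2 powr 0 < 2 powr (real N + u)" using pN du by (simp add: powr_add)
    then have uN: "0 < real N + u" using powr_less_cancel_iff[of 2 0 "real N + u"] by simp
    have "0 \<le> \<alpha> * (real N + u)" using \<alpha> uN by simp
    then have ex: "- ((real N - 1) * \<alpha> + 1) \<le> \<alpha> * u" using \<alpha> by (simp add: algebra_simps)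
    have "D \<le> L" by fact
    also have "\<dots> \<le> M * 2 powr (- ((real N - 1) * \<alpha> + 1))" using Lbound by (simp add: mult.commute)
    also have "\<dots> \<le> M * 2 powr (\<alpha> * u)" using M ex by (intro mult_left_mono) auto
    finally show ?thesis using dpa by simp
  qed
qed

theorem proposition8:
  fixes g :: "real \<Rightarrow> real" and N :: nat and L \<alpha> M :: real
  assumes lip: "\<forall>x y. \<bar>g x - g y\<bar> \<le> \<bar>x - y\<bar>"
    and supp: "\<forall>x. x \<notin> {0..1} \<longrightarrow> g x = 0"
    and N: "N > 0" and L: "L > 0" and \<alpha>: "0 < \<alpha>" "\<alpha> \<le> 1" and M: "M > 0"
    and Lbound: "L \<le> 2 powr (- ((real N - 1) * \<alpha> + 1)) * M"
  shows "\<forall>eps. (\<forall>i\<in>{1..2^N}. eps i \<in> {-1, 1::real}) \<longrightarrow>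
           (\<forall>x\<in>{0..1}. \<forall>y\<in>{0..1}.
              \<bar>G_eps L N g eps x - G_eps L N g eps y\<bar> \<le> M * \<bar>x - y\<bar> powr \<alpha>)"
proof (intro allI impI ballI)
  fix eps :: "nat \<Rightarrow> real" and x y :: real
  assume eps: "\<forall>i\<in>{1..2^N}. eps i \<in> {-1, 1::real}"
  define H where "H \<equiv> \<lambda>t. (\<Sum>k<(2^N::nat). eps (k+1) * g (t - real k))"
  note hb = H_bounds[OF lip supp eps]
  have Hl: "\<bar>H s - H t\<bar> \<le> \<bar>s - t\<bar>" for s t
    unfolding H_def by (rule H_lip) (use hb in auto)
  have Hb: "\<bar>H s - H t\<bar> \<le> 1" for s t
    using hb(1)[of s] hb(2)[of s] hb(1)[of t] hb(2)[of t] unfolding H_def by linarith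
  have G: "G_eps L N g eps z = L * H (2^N * z)" for z
    unfolding G_eps_def H_def by simp
  have diff: "\<bar>G_eps L N g eps x - G_eps L N g eps y\<bar> = L * \<bar>H (2^N * x) - H (2^N * y)\<bar>"
    unfolding G using L by (simp add: abs_mult right_diff_distrib[symmetric])
  show "\<bar>G_eps L N g eps x - G_eps L N g eps y\<bar> \<le> M * \<bar>x - y\<bar> powr \<alpha>"
  proof (cases "x = y")
    case True then show ?thesis using M by simp
  next
    case False
    have D1: "\<bar>G_eps L N g eps x - G_eps L N g eps y\<bar> \<le> L * (2^N * \<bar>x - y\<bar>)"
      unfolding diff using L Hl[of "2^N * x" "2^N * y"]
      by (intro mult_left_mono) (auto simp: right_diff_distrib[symmetric] abs_mult)
    have D2: "\<bar>G_eps L N g eps x - G_eps L N g eps y\<bar> \<le> L"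
      unfolding diff using L Hb mult_left_mono[of _ 1 L] by fastforce
    show ?thesis
      by (rule final_arith[OF \<alpha> M L Lbound _ D1 D2]) (use False in simp)
  qed
qed

end
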